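(* Let $a(z)=\sum_{i\ge0}a_iz^i$ and $b(z)=\sum_{i\ge0}b_iz^i$ be rational series in $\mathbb{R}[[z]]$ satisfying (P1), (P2$_d$) and (P3$_{d+1}$) for a positive integer $d$. If $a(z)/(1-z)\le b(z)/(1-z)$ coefficientwise, then $\lim_{z\to1}a(z)(1-z)^d\le\lim_{z\to1}b(z)(1-z)^d$.
   Context: A rational series is the power series expansion at $z=0$ of a rational function regular at $0$; limits are taken for the rational function. For power series, $\sum c_iz^i\le\sum e_iz^i$ means $c_i\le e_i$ for all $i$. (P1): the rational function has poles only at roots of unity. (P2$_m$): $z=1$ is a pole of order exactly $m$. (P3$_m$): every pole other than $z=1$ has order less than $m$. *)

theory Defs
  imports "HOL-Analysis.Analysis" "HOL-Computational_Algebra.Computational_Algebra"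
begin

text \<open>Order of the pole at z: multiplicity of z as a root of q minus its multiplicity
  as a root of p (truncated at 0); the zero function has no poles.\<close>
definition pole_order :: "real poly \<Rightarrow> real poly \<Rightarrow> complex \<Rightarrow> nat" where
  "pole_order p q z =
     (if p = 0 then 0
      else order z (map_poly complex_of_real q) - order z (map_poly complex_of_real p))"

text \<open>The series with coefficient sequence a is the expansion at 0 of p/q, regular at 0.\<close>
definition rat_series :: "real poly \<Rightarrow> real poly \<Rightarrow> (nat \<Rightarrow> real) \<Rightarrow> bool" where
  "rat_series p q a \<longleftrightarrow> poly q 0 \<noteq> 0 \<and> fps_of_poly q * Abs_fps a = fps_of_poly p"

definition P1 :: "real poly \<Rightarrow> real poly \<Rightarrow> bool" where
  "P1 p q \<longleftrightarrow> (\<forall>z. pole_order p q z > 0 \<longrightarrow> (\<exists>n>0. z ^ n = 1))"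

definition P2 :: "nat \<Rightarrow> real poly \<Rightarrow> real poly \<Rightarrow> bool" where
  "P2 m p q \<longleftrightarrow> pole_order p q 1 = m"

definition P3 :: "nat \<Rightarrow> real poly \<Rightarrow> real poly \<Rightarrow> bool" where
  "P3 m p q \<longleftrightarrow> (\<forall>z. z \<noteq> 1 \<longrightarrow> pole_order p q z < m)"

end

theory Submission imports Defs "HOL-Complex_Analysis.Complex_Analysis" "HOL-Computational_Algebra.Field_as_Ring" begin

lemma map_poly_of_real_mult:
  "map_poly (of_real :: real \<Rightarrow> complex) (p * q) = map_poly of_real p * map_poly of_real q"
  by (simp add: poly_eq_iff coeff_map_poly coeff_mult)

lemma map_poly_of_real_power:
  "map_poly (of_real :: real \<Rightarrow> complex) (p ^ n) = map_poly of_real p ^ n"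
  by (induction n) (simp_all add: map_poly_of_real_mult)

lemma poly_map_poly_of_real:
  "poly (map_poly complex_of_real p) (complex_of_real x) = complex_of_real (poly p x)"
  by (induction p) (auto simp: map_poly_pCons)

lemma order_map_of_real:
  fixes p :: "real poly"
  assumes "p \<noteq> 0"
  shows "order (complex_of_real x) (map_poly complex_of_real p) = order x p"
proof -
  obtain r where r: "p = [:- x, 1:] ^ order x p * r" and nd: "\<not> [:- x, 1:] dvd r"
    using order_decomp[OF assms] by blast
  have rx: "poly r x \<noteq> 0" using nd by (simp add: poly_eq_0_iff_dvd)
  have "map_poly complex_of_real p = [:- complex_of_real x, 1:] ^ order x p * map_poly complex_of_real r"
    by (subst r) (simp add: map_poly_of_real_mult map_poly_of_real_power map_poly_pCons)
  moreover have "poly (map_poly complex_of_real r) (complex_of_real x) \<noteq> 0"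
    using rx by (simp add: poly_map_poly_of_real)
  moreover have "map_poly complex_of_real r \<noteq> 0" using rx by (auto simp: map_poly_eq_0_iff)
  ultimately show ?thesis
    by (simp add: order_mult order_power_n_n order_0I)
qed

lemma limit_exists:
  fixes p q :: "real poly"
  assumes "p \<noteq> 0" "q \<noteq> 0" "order 1 q = order 1 p + d"
  shows "\<exists>L. ((\<lambda>x. poly p x / poly q x * (1 - x) ^ d) \<longlongrightarrow> L) (at 1)
          \<and> eventually (\<lambda>x. poly q x \<noteq> 0) (at 1)"
proof -
  obtain p1 where p1: "p = [:- 1, 1:] ^ order 1 p * p1" and np: "\<not> [:- 1, 1:] dvd p1"
    using order_decomp[OF assms(1)] by blast
  obtain q1 where q1: "q = [:- 1, 1:] ^ order 1 q * q1" and nq: "\<not> [:- 1, 1:] dvd q1"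
    using order_decomp[OF assms(2)] by blast
  have p11: "poly p1 1 \<noteq> 0" using np by (simp add: poly_eq_0_iff_dvd)
  have q11: "poly q1 1 \<noteq> 0" using nq by (simp add: poly_eq_0_iff_dvd)
  have "((\<lambda>x. poly q1 x) \<longlongrightarrow> poly q1 1) (at 1)"
    by (intro tendsto_intros)
  hence ev1: "eventually (\<lambda>x. poly q1 x \<noteq> 0) (at 1)"
    using q11 tendsto_imp_eventually_ne by blast
  have ev2: "eventually (\<lambda>x. x \<noteq> (1::real)) (at 1)" by (simp add: eventually_at_filter)
  have evq: "eventually (\<lambda>x. poly q x \<noteq> 0) (at 1)"
    using ev1 ev2 by eventually_elim (subst q1, simp)
  have eq: "eventually (\<lambda>x. (-1) ^ d * poly p1 x / poly q1 x = poly p x / poly q x * (1 - x) ^ d) (at 1)"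
    using ev1 ev2
  proof eventually_elim
    case (elim x)
    have ne: "x - 1 \<noteq> 0" using elim by simp
    have pq: "poly p x / poly q x = (x - 1) ^ order 1 p * poly p1 x / ((x - 1) ^ order 1 p * (x - 1) ^ d * poly q1 x)"
      by (subst p1, subst q1) (simp add: assms(3) power_add)
    have om: "(1 - x) ^ d = (-1) ^ d * (x - 1) ^ d"
      by (metis minus_diff_eq power_minus)
    show ?case unfolding pq om using ne elim by (simp add: field_simps)
  qed
  have "((\<lambda>x. (-1) ^ d * poly p1 x / poly q1 x) \<longlongrightarrow> (-1) ^ d * poly p1 1 / poly q1 1) (at 1)"
    using q11 by (intro tendsto_intros) auto
  hence "((\<lambda>x. poly p x / poly q x * (1 - x) ^ d) \<longlongrightarrow> (-1) ^ d * poly p1 1 / poly q1 1) (at 1)"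
    using eq by (rule Lim_transform_eventually)
  thus ?thesis using evq by blast
qed

lemma fps_complex_eq:
  assumes "fps_of_poly q * Abs_fps a = fps_of_poly p"
  shows "fps_of_poly (map_poly complex_of_real q) * Abs_fps (\<lambda>n. complex_of_real (a n))
         = fps_of_poly (map_poly complex_of_real p)"
proof (rule fps_ext)
  fix n
  have "coeff p n = (\<Sum>i=0..n. coeff q i * a (n - i))"
    using arg_cong[OF assms, of "\<lambda>f. f $ n"] by (simp add: fps_mult_nth)
  thus "(fps_of_poly (map_poly complex_of_real q) * Abs_fps (\<lambda>n. complex_of_real (a n))) $ n
         = fps_of_poly (map_poly complex_of_real p) $ n"
    by (simp add: fps_mult_nth coeff_map_poly)
qed

lemma radius_ge_1:
  assumes rs: "rat_series p q a" and p1: "P1 p q" and pnz: "p \<noteq> 0"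
  shows "fps_conv_radius (Abs_fps a) \<ge> 1"
proof -
  define pC where "pC = map_poly complex_of_real p"
  define qC where "qC = map_poly complex_of_real q"
  define AC where "AC = Abs_fps (\<lambda>n. complex_of_real (a n))"
  have qnz: "q \<noteq> 0" using rs by (auto simp: rat_series_def)
  have pCnz: "pC \<noteq> 0" using pnz by (simp add: pC_def map_poly_eq_0_iff)
  have qCnz: "qC \<noteq> 0" using qnz by (simp add: qC_def map_poly_eq_0_iff)
  have eqC: "fps_of_poly qC * AC = fps_of_poly pC"
    unfolding pC_def qC_def AC_def by (rule fps_complex_eq) (use rs in \<open>simp add: rat_series_def\<close>)
  define g where "g = gcd pC qC"
  define p2 where "p2 = pC div g"
  define q2 where "q2 = qC div g"
  have gnz: "g \<noteq> 0" using pCnz by (simp add: g_def)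
  have pCe: "pC = g * p2" unfolding p2_def g_def by simp
  have qCe: "qC = g * q2" unfolding q2_def g_def by simp
  have cop: "coprime p2 q2" unfolding p2_def q2_def g_def
    by (rule div_gcd_coprime) (use pCnz in auto)
  have q2nz: "q2 \<noteq> 0" using qCnz qCe by auto
  have p2nz: "p2 \<noteq> 0" using pCnz pCe by auto
  have eq2: "fps_of_poly q2 * AC = fps_of_poly p2"
  proof -
    have "fps_of_poly g * (fps_of_poly q2 * AC) = fps_of_poly g * fps_of_poly p2"
      using eqC by (simp add: pCe qCe fps_of_poly_mult mult.assoc)
    moreover have "fps_of_poly g \<noteq> 0" using gnz
      by (metis fps_of_poly_0 fps_of_poly_eq_iff)
    ultimately show ?thesis by simp
  qed
  have noroot: "poly q2 z \<noteq> 0" if "norm z < 1" for z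
  proof
    assume q2z: "poly q2 z = 0"
    have p2z: "poly p2 z \<noteq> 0"
    proof
      assume "poly p2 z = 0"
      hence "[:-z, 1:] dvd p2" "[:-z, 1:] dvd q2" using q2z by (simp_all add: poly_eq_0_iff_dvd)
      hence "is_unit [:-z, 1:]" using cop coprime_common_divisor by blast
      thus False by (simp add: is_unit_poly_iff)
    qed
    have "order z qC = order z g + order z q2" using qCe gnz q2nz by (simp add: order_mult)
    moreover have "order z pC = order z g + order z p2" using pCe gnz p2nz by (simp add: order_mult)
    moreover have "order z p2 = 0" using p2z by (rule order_0I)
    moreover have "order z q2 > 0" using q2z q2nz order_root by blast
    ultimately have "pole_order p q z > 0"
      unfolding pole_order_def using pnz by (simp add: pC_def qC_def)
    with p1 obtain n where n: "n > 0" "z ^ n = 1" unfolding P1_def by blast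
    hence "norm z ^ n = 1" by (metis norm_one norm_power)
    moreover have "norm z ^ n < 1" using that n(1) by (simp add: power_less_one_iff)
    ultimately show False by simp
  qed
  have "fps_conv_radius (fps_of_poly p2 / fps_of_poly q2) \<ge> Min {1, fps_conv_radius (fps_of_poly p2), fps_conv_radius (fps_of_poly q2)}"
    by (rule fps_conv_radius_divide') (use noroot in auto)
  hence r1: "fps_conv_radius (fps_of_poly p2 / fps_of_poly q2) \<ge> 1" by simp
  have q20: "fps_of_poly q2 \<noteq> 0" using q2nz by (metis fps_of_poly_0 fps_of_poly_eq_iff)
  have "fps_of_poly p2 / fps_of_poly q2 = AC" using eq2[symmetric] q20 by simp
  hence "fps_conv_radius AC \<ge> 1" using r1 by simp
  moreover have "fps_conv_radius AC = fps_conv_radius (Abs_fps a)"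
  proof -
    have "fps_conv_radius AC = conv_radius (\<lambda>n. norm (complex_of_real (a n)))"
      unfolding AC_def fps_conv_radius_def by (subst conv_radius_norm) simp
    also have "\<dots> = conv_radius (\<lambda>n. norm (a n))" by simp
    also have "\<dots> = fps_conv_radius (Abs_fps a)" unfolding fps_conv_radius_def by (subst conv_radius_norm) simp
    finally show ?thesis .
  qed
  ultimately show ?thesis by simp
qed


lemma geom_radius: "fps_conv_radius (Abs_fps (\<lambda>_. 1::real)) \<ge> 1"
  unfolding fps_conv_radius_def
proof (rule conv_radius_geI_ex)
  fix r :: real assume r: "0 < r" "ereal r < 1"
  hence "r < 1" by simp
  hence "summable (\<lambda>n. r ^ n)" using r by (intro summable_geometric) simp
  thus "\<exists>z::real. norm z = r \<and> summable (\<lambda>n. fps_nth (Abs_fps (\<lambda>_. 1::real)) n * z ^ n)"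
    using r by (intro exI[of _ r]) simp
qed

lemma geom_eq: "(1 - fps_X) * Abs_fps (\<lambda>_. 1::real) = 1"
proof (rule fps_ext)
  fix n show "((1 - fps_X) * Abs_fps (\<lambda>_. 1::real)) $ n = (1::real fps) $ n"
    by (cases n) (simp_all add: fps_mult_nth algebra_simps sum.atLeast0_atMost_Suc_shift del: sum.atMost_Suc)
qed

lemma div_props:
  fixes a :: "nat \<Rightarrow> real"
  assumes "fps_conv_radius (Abs_fps a) \<ge> 1"
  shows "fps_conv_radius (Abs_fps a / (1 - fps_X)) \<ge> 1"
    and "\<And>x::real. norm x < 1 \<Longrightarrow> eval_fps (Abs_fps a) x = (1 - x) * eval_fps (Abs_fps a / (1 - fps_X)) x"
proof -
  define G where "G = Abs_fps (\<lambda>_. 1::real)"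
  have nz: "(1 - fps_X :: real fps) \<noteq> 0"
  proof
    assume "(1 - fps_X :: real fps) = 0"
    hence "(1 - fps_X :: real fps) $ 0 = 0" by simp
    thus False by simp
  qed
  have e: "(1 - fps_X) * (Abs_fps a * G) = Abs_fps a"
  proof -
    have "(1 - fps_X) * (Abs_fps a * G) = Abs_fps a * ((1 - fps_X) * G)"
      by (simp only: mult.left_commute)
    also have "(1 - fps_X) * G = 1" unfolding G_def by (rule geom_eq)
    finally show ?thesis by simp
  qed
  have C: "Abs_fps a / (1 - fps_X) = Abs_fps a * G"
  proof -
    have "Abs_fps a / (1 - fps_X) = ((1 - fps_X) * (Abs_fps a * G)) / (1 - fps_X)"
      by (simp only: e)
    also have "\<dots> = Abs_fps a * G" by (rule nonzero_mult_div_cancel_left[OF nz])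
    finally show ?thesis .
  qed
  have "min (fps_conv_radius (Abs_fps a)) (fps_conv_radius G) \<le> fps_conv_radius (Abs_fps a * G)"
    by (rule fps_conv_radius_mult)
  moreover have "fps_conv_radius G \<ge> 1" using geom_radius by (simp add: G_def)
  ultimately have "1 \<le> fps_conv_radius (Abs_fps a * G)" using assms
    by (meson min.boundedI order_trans)
  thus r: "fps_conv_radius (Abs_fps a / (1 - fps_X)) \<ge> 1" by (simp only: C)
  fix x :: real assume x: "norm x < 1"
  have r1: "fps_conv_radius (1 - fps_X :: real fps) = \<infinity>"
    using fps_conv_radius_diff[of "1::real fps" fps_X] by simp
  have "eval_fps (Abs_fps a) x = eval_fps ((1 - fps_X) * (Abs_fps a / (1 - fps_X))) x"
    by (simp only: C e)
  also have "\<dots> = eval_fps (1 - fps_X) x * eval_fps (Abs_fps a / (1 - fps_X)) x"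
  proof (rule eval_fps_mult)
    have x1: "ereal (norm x) < 1" using x by (simp add: one_ereal_def)
    show "ereal (norm x) < fps_conv_radius (Abs_fps a / (1 - fps_X))"
      using less_le_trans[OF x1 r] .
  qed (simp add: r1)
  also have "eval_fps (1 - fps_X :: real fps) x = 1 - x"
    by (subst eval_fps_diff) (simp_all add: r1)
  finally show "eval_fps (Abs_fps a) x = (1 - x) * eval_fps (Abs_fps a / (1 - fps_X)) x" .
qed



lemma side:
  fixes a :: "nat \<Rightarrow> real"
  assumes d: "d > 0" and rs: "rat_series p q a" and p1: "P1 p q" and p2: "P2 d p q"
  shows "\<exists>L. ((\<lambda>x. poly p x / poly q x * (1 - x) ^ d) \<longlongrightarrow> L) (at 1)
          \<and> eventually (\<lambda>x. x < 1 \<and> poly p x / poly q x * (1 - x) ^ d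
               = (1 - x) ^ (d + 1) * eval_fps (Abs_fps a / (1 - fps_X)) x) (at_left 1)"
proof -
  have pnz: "p \<noteq> 0" using p2 d by (auto simp: P2_def pole_order_def)
  have qnz: "q \<noteq> 0" using rs by (auto simp: rat_series_def)
  have po: "order 1 q - order 1 p = d"
    using p2 pnz order_map_of_real[OF pnz, of 1] order_map_of_real[OF qnz, of 1]
    by (simp add: P2_def pole_order_def)
  hence ord: "order 1 q = order 1 p + d" using d by linarith
  obtain L where L: "((\<lambda>x. poly p x / poly q x * (1 - x) ^ d) \<longlongrightarrow> L) (at 1)"
    and evq: "eventually (\<lambda>x. poly q x \<noteq> 0) (at 1)"
    using limit_exists[OF pnz qnz ord] by blast
  have rad: "fps_conv_radius (Abs_fps a) \<ge> 1" by (rule radius_ge_1[OF rs p1 pnz])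
  have fe: "fps_of_poly q * Abs_fps a = fps_of_poly p" using rs by (simp add: rat_series_def)
  have evq': "eventually (\<lambda>x. poly q x \<noteq> 0) (at_left 1)"
    using evq by (rule filter_leD[OF at_le, rotated]) simp
  have "eventually (\<lambda>x. x \<in> {0<..<1::real}) (at_left 1)"
    by (rule eventually_at_left_real) simp
  hence "eventually (\<lambda>x. x < 1 \<and> poly p x / poly q x * (1 - x) ^ d
               = (1 - x) ^ (d + 1) * eval_fps (Abs_fps a / (1 - fps_X)) x) (at_left 1)"
    using evq'
  proof eventually_elim
    case (elim x)
    have x: "norm x < 1" using elim by auto
    have x1: "ereal (norm x) < 1" using x by (simp add: one_ereal_def)
    have "poly p x = eval_fps (fps_of_poly q * Abs_fps a) x" using fe by simp
    also have "\<dots> = poly q x * eval_fps (Abs_fps a) x"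
      by (subst eval_fps_mult) (use less_le_trans[OF x1 rad] in auto)
    finally have "poly p x / poly q x = eval_fps (Abs_fps a) x" using elim by simp
    also have "\<dots> = (1 - x) * eval_fps (Abs_fps a / (1 - fps_X)) x"
      by (rule div_props(2)[OF rad x])
    finally show ?case using elim by simp
  qed
  thus ?thesis using L by blast
qed

theorem lemma4p4:
  fixes a b :: "nat \<Rightarrow> real" and pa qa pb qb :: "real poly" and d :: nat
  assumes "d > 0"
    and "rat_series pa qa a" and "P1 pa qa" and "P2 d pa qa" and "P3 (d + 1) pa qa"
    and "rat_series pb qb b" and "P1 pb qb" and "P2 d pb qb" and "P3 (d + 1) pb qb"
    and "\<forall>n. fps_nth (Abs_fps a / (1 - fps_X)) n \<le> fps_nth (Abs_fps b / (1 - fps_X)) n"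
  shows "\<exists>La Lb. ((\<lambda>x. poly pa x / poly qa x * (1 - x) ^ d) \<longlongrightarrow> La) (at (1::real))
              \<and> ((\<lambda>x. poly pb x / poly qb x * (1 - x) ^ d) \<longlongrightarrow> Lb) (at (1::real))
              \<and> La \<le> Lb"
proof -
  obtain La where La: "((\<lambda>x. poly pa x / poly qa x * (1 - x) ^ d) \<longlongrightarrow> La) (at 1)"
    and eva: "eventually (\<lambda>x. x < 1 \<and> poly pa x / poly qa x * (1 - x) ^ d
               = (1 - x) ^ (d + 1) * eval_fps (Abs_fps a / (1 - fps_X)) x) (at_left 1)"
    using side[OF assms(1,2,3,4)] by blast
  obtain Lb where Lb: "((\<lambda>x. poly pb x / poly qb x * (1 - x) ^ d) \<longlongrightarrow> Lb) (at 1)"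
    and evb: "eventually (\<lambda>x. x < 1 \<and> poly pb x / poly qb x * (1 - x) ^ d
               = (1 - x) ^ (d + 1) * eval_fps (Abs_fps b / (1 - fps_X)) x) (at_left 1)"
    using side[OF assms(1,6,7,8)] by blast
  have pnza: "pa \<noteq> 0" using assms(4,1) by (auto simp: P2_def pole_order_def)
  have pnzb: "pb \<noteq> 0" using assms(8,1) by (auto simp: P2_def pole_order_def)
  have ra: "fps_conv_radius (Abs_fps a / (1 - fps_X)) \<ge> 1"
    by (rule div_props(1)[OF radius_ge_1[OF assms(2,3) pnza]])
  have rb: "fps_conv_radius (Abs_fps b / (1 - fps_X)) \<ge> 1"
    by (rule div_props(1)[OF radius_ge_1[OF assms(6,7) pnzb]])
  have "eventually (\<lambda>x. x \<in> {0<..<1::real}) (at_left 1)"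
    by (rule eventually_at_left_real) simp
  hence ev: "eventually (\<lambda>x. poly pa x / poly qa x * (1 - x) ^ d \<le> poly pb x / poly qb x * (1 - x) ^ d) (at_left 1)"
    using eva evb
  proof eventually_elim
    case (elim x)
    have x1: "ereal (norm x) < 1" using elim by (simp add: one_ereal_def)
    have "eval_fps (Abs_fps a / (1 - fps_X)) x \<le> eval_fps (Abs_fps b / (1 - fps_X)) x"
      unfolding eval_fps_def
    proof (rule suminf_le)
      fix n
      show "fps_nth (Abs_fps a / (1 - fps_X)) n * x ^ n \<le> fps_nth (Abs_fps b / (1 - fps_X)) n * x ^ n"
        using assms(10) elim by (intro mult_right_mono) auto
    next
      show "summable (\<lambda>n. fps_nth (Abs_fps a / (1 - fps_X)) n * x ^ n)"
        by (rule summable_fps) (use less_le_trans[OF x1 ra] in auto)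
      show "summable (\<lambda>n. fps_nth (Abs_fps b / (1 - fps_X)) n * x ^ n)"
        by (rule summable_fps) (use less_le_trans[OF x1 rb] in auto)
    qed
    moreover have "(1 - x) ^ (d + 1) \<ge> 0" using elim by simp
    ultimately show ?case using elim by (simp add: mult_left_mono)
  qed
  have La': "((\<lambda>x. poly pa x / poly qa x * (1 - x) ^ d) \<longlongrightarrow> La) (at_left 1)"
    using La by (rule filterlim_mono) (simp_all add: at_le)
  have Lb': "((\<lambda>x. poly pb x / poly qb x * (1 - x) ^ d) \<longlongrightarrow> Lb) (at_left 1)"
    using Lb by (rule filterlim_mono) (simp_all add: at_le)
  have "La \<le> Lb"
    by (rule tendsto_le[OF trivial_limit_at_left_real Lb' La' ev])
  thus ?thesis using La Lb by blast
qed

end
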